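(* Let $A$ be a positive word in the band generators with $e\le A\le\delta$. Then $A$ has no decomposition $A=BaCbD$ with $B,C,D$ positive words (possibly empty), $a,b$ band generators, and $(a,b)$ an obstructing pair.
   Context: $B_n$ is the $n$-string braid group with band generators $a_{ts}=(\sigma_{t-1}\cdots\sigma_{s+1})\sigma_s(\sigma_{s+1}^{-1}\cdots\sigma_{t-1}^{-1})$, $n\ge t>s\ge1$; $e$ is the identity, and a positive word is a word in positive powers of the $a_{ts}$. $\delta=a_{n(n-1)}\cdots a_{21}$. For $V,W\in B_n$, $V\le W$ means $W=P_1VP_2$ with $P_1,P_2$ represented by positive words. An ordered pair $(a,b)$ of band generators is an obstructing pair if, for some integers $n\ge t>s>r>q\ge1$, it is one of: (1) $(a_{tr},a_{sq})$; (2) $(a_{sq},a_{tr})$; (3) $(a_{sr},a_{ts})$; (4) $(a_{ts},a_{tr})$; (5) $(a_{tr},a_{sr})$; (6) $(a_{ts},a_{ts})$ (for cases (4)-(6) only the indices appearing matter). *)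

theory Defs
  imports Main
begin

text \<open>Words in the Artin generators: a letter (i, True) is sigma_i, (i, False) is sigma_i inverse.\<close>
type_synonym sword = "(nat \<times> bool) list"

inductive braid_eq :: "nat \<Rightarrow> sword \<Rightarrow> sword \<Rightarrow> bool" for n :: nat where
  refl: "braid_eq n w w"
| sym: "braid_eq n u w \<Longrightarrow> braid_eq n w u"
| trans: "braid_eq n u v \<Longrightarrow> braid_eq n v w \<Longrightarrow> braid_eq n u w"
| ctxt: "braid_eq n u w \<Longrightarrow> braid_eq n (x @ u @ y) (x @ w @ y)"
| cancel: "1 \<le> i \<Longrightarrow> i < n \<Longrightarrow> braid_eq n [(i, b), (i, \<not> b)] []"
| comm: "1 \<le> i \<Longrightarrow> i < n \<Longrightarrow> 1 \<le> j \<Longrightarrow> j < n \<Longrightarrow> i + 2 \<le> j \<Longrightarrow>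
          braid_eq n [(i, True), (j, True)] [(j, True), (i, True)]"
| braid: "1 \<le> i \<Longrightarrow> i + 1 < n \<Longrightarrow>
          braid_eq n [(i, True), (i+1, True), (i, True)] [(i+1, True), (i, True), (i+1, True)]"

text \<open>Band generator a_ts, encoded as the pair (t, s), valid when n >= t > s >= 1.\<close>
definition valid_band :: "nat \<Rightarrow> nat \<times> nat \<Rightarrow> bool" where
  "valid_band n a \<longleftrightarrow> n \<ge> fst a \<and> fst a > snd a \<and> snd a \<ge> 1"

text \<open>a_ts = (sigma_(t-1) ... sigma_(s+1)) sigma_s (sigma_(s+1)^-1 ... sigma_(t-1)^-1).\<close>
definition band_word :: "nat \<times> nat \<Rightarrow> sword" where
  "band_word a = (let t = fst a; s = snd a in
     map (\<lambda>i. (i, True)) (rev [s+1..<t]) @ [(s, True)] @ map (\<lambda>i. (i, False)) [s+1..<t])"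

definition positive_word :: "nat \<Rightarrow> (nat \<times> nat) list \<Rightarrow> bool" where
  "positive_word n w \<longleftrightarrow> (\<forall>a \<in> set w. valid_band n a)"

definition expand :: "(nat \<times> nat) list \<Rightarrow> sword" where
  "expand w = concat (map band_word w)"

definition delta :: "nat \<Rightarrow> (nat \<times> nat) list" where
  "delta n = map (\<lambda>k. (k+1, k)) (rev [1..<n])"

definition braid_le :: "nat \<Rightarrow> sword \<Rightarrow> sword \<Rightarrow> bool" where
  "braid_le n V W \<longleftrightarrow> (\<exists>P1 P2. positive_word n P1 \<and> positive_word n P2 \<and>
      braid_eq n W (expand P1 @ V @ expand P2))"

definition obstructing :: "nat \<Rightarrow> nat \<times> nat \<Rightarrow> nat \<times> nat \<Rightarrow> bool" where
  "obstructing n a b \<longleftrightarrow>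
     (\<exists>t s r q. n \<ge> t \<and> t > s \<and> s > r \<and> r > q \<and> q \<ge> 1 \<and>
        ((a = (t, r) \<and> b = (s, q)) \<or> (a = (s, q) \<and> b = (t, r))))
   \<or> (\<exists>t s r. n \<ge> t \<and> t > s \<and> s > r \<and> r \<ge> 1 \<and>
        ((a = (s, r) \<and> b = (t, s)) \<or> (a = (t, s) \<and> b = (t, r)) \<or> (a = (t, r) \<and> b = (s, r))))
   \<or> (\<exists>t s. n \<ge> t \<and> t > s \<and> s \<ge> 1 \<and> a = (t, s) \<and> b = (t, s))"

end

theory Submission
  imports Defs
begin

definition sw :: "nat \<Rightarrow> nat \<Rightarrow> nat \<Rightarrow> nat" where
  "sw i j = (\<lambda>x. if x = i then j else if x = j then i else x)"

fun perm_of :: "sword \<Rightarrow> nat \<Rightarrow> nat" where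
  "perm_of [] = id"
| "perm_of (p # w) = sw (fst p) (Suc (fst p)) \<circ> perm_of w"

fun esum :: "sword \<Rightarrow> int" where
  "esum [] = 0"
| "esum (p # w) = (if snd p then 1 else -1) + esum w"

lemma perm_of_append: "perm_of (u @ w) = perm_of u \<circ> perm_of w"
  by (induction u) (auto simp: comp_assoc)

lemma esum_append: "esum (u @ w) = esum u + esum w"
  by (induction u) auto

lemma sw_sw: "sw i j \<circ> sw i j = id"
  by (auto simp: sw_def fun_eq_iff)

lemma braid_eq_inv: "braid_eq n u w \<Longrightarrow> perm_of u = perm_of w \<and> esum u = esum w"
proof (induction rule: braid_eq.induct)
  case (ctxt u w x y)
  then show ?case by (simp add: perm_of_append esum_append)
next
  case (cancel i b)
  then show ?case by (simp add: sw_sw)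
next
  case (comm i j)
  then show ?case by (auto simp: sw_def fun_eq_iff)
next
  case (braid i)
  then show ?case by (auto simp: sw_def fun_eq_iff)
qed auto

lemma band_word_Suc:
  assumes "s < t"
  shows "band_word (Suc t, s) = (t, True) # band_word (t, s) @ [(t, False)]"
proof -
  have "[s+1..<Suc t] = [s+1..<t] @ [t]" using assms by simp
  then show ?thesis by (simp add: band_word_def)
qed

lemma band_word_base: "band_word (Suc s, s) = [(s, True)]"
  by (simp add: band_word_def)

lemma sw_conj: "sw a b \<circ> sw x y \<circ> sw a b = sw (sw a b x) (sw a b y)"
  by (auto simp: sw_def fun_eq_iff)

lemma perm_band: "s < t \<Longrightarrow> perm_of (band_word (t, s)) = sw s t"
proof (induction t)
  case 0
  then show ?case by simp
next
  case (Suc t)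
  show ?case
  proof (cases "s = t")
    case True
    then show ?thesis by (simp add: band_word_base)
  next
    case False
    then have st: "s < t" using Suc.prems by simp
    have "perm_of (band_word (Suc t, s)) = sw t (Suc t) \<circ> sw s t \<circ> sw t (Suc t)"
      using Suc.IH[OF st] by (simp add: band_word_Suc[OF st] perm_of_append comp_assoc)
    also have "\<dots> = sw s (Suc t)" using st by (auto simp: sw_def fun_eq_iff)
    finally show ?thesis .
  qed
qed

lemma esum_band: "esum (band_word (t, s)) = 1"
proof -
  have "\<And>l. esum (map (\<lambda>i. (i, True)) l) = int (length l)"
    by (induct_tac l) auto
  moreover have "\<And>l. esum (map (\<lambda>i. (i, False)) l) = - int (length l)"
    by (induct_tac l) auto
  ultimately show ?thesis by (simp add: band_word_def esum_append)
qed

fun prodE :: "(nat \<times> nat) list \<Rightarrow> nat \<Rightarrow> nat" where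
  "prodE [] = id"
| "prodE (p # L) = sw (snd p) (fst p) \<circ> prodE L"

lemma prodE_append: "prodE (u @ w) = prodE u \<circ> prodE w"
  by (induction u) (auto simp: comp_assoc)

lemma expand_append: "expand (u @ w) = expand u @ expand w"
  by (simp add: expand_def)

lemma perm_expand: "(\<forall>p\<in>set L. snd p < fst p) \<Longrightarrow> perm_of (expand L) = prodE L"
  by (induction L) (auto simp: expand_def perm_of_append perm_band)

lemma esum_expand: "esum (expand L) = int (length L)"
  by (induction L) (auto simp: expand_def esum_append esum_band)

definition cyc :: "nat \<Rightarrow> nat \<Rightarrow> nat" where
  "cyc n x = (if x = 1 then n else if 2 \<le> x \<and> x \<le> n then x - 1 else x)"

lemma delta_Suc: "1 \<le> n \<Longrightarrow> delta (Suc n) = (Suc n, n) # delta n"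
proof -
  assume "1 \<le> n"
  then have "[1..<Suc n] = [1..<n] @ [n]" by simp
  then show ?thesis by (simp add: delta_def)
qed

lemma perm_delta: "1 \<le> n \<Longrightarrow> perm_of (expand (delta n)) = cyc n"
proof (induction n rule: nat_induct_at_least)
  case base
  then show ?case by (auto simp: delta_def expand_def cyc_def fun_eq_iff)
next
  case (Suc n)
  have "perm_of (expand (delta (Suc n))) = sw n (Suc n) \<circ> cyc n"
    using Suc by (simp add: delta_Suc expand_def perm_of_append perm_band)
  also have "\<dots> = cyc (Suc n)" using Suc.hyps by (auto simp: sw_def cyc_def fun_eq_iff)
  finally show ?case .
qed

lemma length_delta: "length (delta n) = n - 1"
  by (simp add: delta_def)


definition edg :: "(nat \<times> nat) list \<Rightarrow> (nat \<times> nat) set" where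
  "edg M = {(x, y). (x, y) \<in> set M \<or> (y, x) \<in> set M}"

definition conn :: "(nat \<times> nat) list \<Rightarrow> nat \<Rightarrow> nat \<Rightarrow> bool" where
  "conn M x y \<longleftrightarrow> (x, y) \<in> (edg M)\<^sup>*"

lemma conn_refl: "conn M x x" by (simp add: conn_def)

lemma sym_edg: "sym (edg M)" by (auto simp: edg_def sym_def)

lemma conn_sym: "conn M x y \<Longrightarrow> conn M y x"
  unfolding conn_def by (meson sym_edg sym_rtrancl symD)

lemma conn_trans: "conn M x y \<Longrightarrow> conn M y z \<Longrightarrow> conn M x z"
  unfolding conn_def by simp

lemma conn_Cons: "conn M x y \<Longrightarrow> conn (p # M) x y"
proof -
  have "edg M \<subseteq> edg (p # M)" by (auto simp: edg_def)
  then show "conn M x y \<Longrightarrow> conn (p # M) x y" unfolding conn_def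
    using rtrancl_mono by blast
qed

lemma conn_prodE: "conn M x (prodE M x)"
proof (induction M arbitrary: x)
  case Nil
  then show ?case by (simp add: conn_refl)
next
  case (Cons p M)
  obtain t s where p: "p = (t, s)" by fastforce
  let ?y = "prodE M x"
  have "conn (p # M) x ?y" using Cons conn_Cons by blast
  moreover have "conn (p # M) ?y (sw s t ?y)"
  proof -
    have "(?y, sw s t ?y) \<in> edg (p # M) \<or> sw s t ?y = ?y"
      unfolding sw_def edg_def p by simp
    then show ?thesis unfolding conn_def by auto
  qed
  ultimately show ?case using p conn_trans by auto
qed

lemma conn_contract:
  assumes "conn ((u, v) # M) x y"
  shows "conn (map (\<lambda>(a, b). (if a = v then u else a, if b = v then u else b)) M)
           (if x = v then u else x) (if y = v then u else y)"
proof -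
  let ?f = "\<lambda>a. if a = v then u else a"
  let ?M = "map (\<lambda>(a, b). (?f a, ?f b)) M"
  have "(x, y) \<in> (edg ((u, v) # M))\<^sup>*" using assms by (simp add: conn_def)
  then show ?thesis
  proof (induction rule: rtrancl_induct)
    case base
    then show ?case by (simp add: conn_refl)
  next
    case (step y z)
    have "conn ?M (?f y) (?f z)"
    proof (cases "(y, z) \<in> edg M")
      case True
      then have "(y, z) \<in> set M \<or> (z, y) \<in> set M" by (simp add: edg_def)
      then have "(?f y, ?f z) \<in> set ?M \<or> (?f z, ?f y) \<in> set ?M"
        by (metis (no_types, lifting) case_prod_conv image_eqI set_map)
      then have "(?f y, ?f z) \<in> edg ?M" by (simp add: edg_def)
      then show ?thesis by (simp add: conn_def)
    next
      case False
      with step.hyps(2) have "?f y = ?f z" by (auto simp: edg_def)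
      then show ?thesis by (simp add: conn_refl)
    qed
    with step.IH show ?case using conn_trans by blast
  qed
qed

lemma count_conn_aux:
  "length M = k \<Longrightarrow> finite V \<Longrightarrow> finite R0 \<Longrightarrow> (\<forall>x\<in>V. \<exists>r\<in>R0. conn M x r) \<Longrightarrow> card V \<le> k + card R0"
proof (induction k arbitrary: M V R0)
  case 0
  then have "M = []" by simp
  then have "V \<subseteq> R0" using 0 by (auto simp: conn_def edg_def)
  then show ?case using 0 by (simp add: card_mono)
next
  case (Suc k)
  obtain p M' where pM: "M = p # M'" using Suc.prems(1) by (cases M) auto
  obtain u v where p: "p = (u, v)" by fastforce
  define f where "f = (\<lambda>a. if a = v then u else a)"
  have "\<forall>x\<in>f ` V. \<exists>r\<in>f ` R0. conn (map (\<lambda>(a, b). (f a, f b)) M') x r"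
  proof
    fix x' assume "x' \<in> f ` V"
    then obtain x where x: "x \<in> V" "x' = f x" by blast
    then obtain r where r: "r \<in> R0" "conn M x r" using Suc.prems(4) by blast
    have "conn (map (\<lambda>(a, b). (f a, f b)) M') x' (f r)"
      using conn_contract[of u v M' x r] r(2) x(2) p pM unfolding f_def by simp
    moreover have "f r \<in> f ` R0" using r(1) by simp
    ultimately show "\<exists>r\<in>f ` R0. conn (map (\<lambda>(a, b). (f a, f b)) M') x' r" by blast
  qed
  moreover have "length (map (\<lambda>(a, b). (f a, f b)) M') = k" using Suc.prems(1) pM by simp
  ultimately have "card (f ` V) \<le> k + card (f ` R0)"
    using Suc.IH[of "map (\<lambda>(a, b). (f a, f b)) M'" "f ` V" "f ` R0"] Suc.prems(2,3) by simp
  also have "\<dots> \<le> k + card R0" using card_image_le[OF Suc.prems(3), of f] by simp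
  finally have A: "card (f ` V) \<le> k + card R0" .
  have "inj_on f (V - {v})" unfolding f_def inj_on_def by auto
  then have "card (V - {v}) = card (f ` (V - {v}))" by (simp add: card_image)
  also have "\<dots> \<le> card (f ` V)" using Suc.prems(2) by (intro card_mono) auto
  finally have "card (V - {v}) \<le> card (f ` V)" .
  moreover have "card V \<le> card (V - {v}) + 1"
    using Suc.prems(2) by (auto simp: card_Diff_singleton_if)
  ultimately show ?case using A by simp
qed

lemma count_conn:
  "finite V \<Longrightarrow> finite R0 \<Longrightarrow> (\<forall>x\<in>V. \<exists>r\<in>R0. conn M x r) \<Longrightarrow> card V \<le> length M + card R0"
  using count_conn_aux by blast

definition cj :: "nat \<times> nat \<Rightarrow> nat \<times> nat \<Rightarrow> nat \<times> nat" where
  "cj a p = (sw (snd a) (fst a) (fst p), sw (snd a) (fst a) (snd p))"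

lemma hurwitz: "sw (snd a) (fst a) \<circ> prodE L = prodE (map (cj a) L) \<circ> sw (snd a) (fst a)"
proof (induction L)
  case Nil
  then show ?case by simp
next
  case (Cons p L)
  let ?h = "sw (snd a) (fst a)"
  have "?h \<circ> prodE (p # L) = (?h \<circ> sw (snd p) (fst p) \<circ> ?h) \<circ> (?h \<circ> prodE L)"
    by (simp add: fun_eq_iff sw_def)
  also have "\<dots> = sw (snd (cj a p)) (fst (cj a p)) \<circ> prodE (map (cj a) L) \<circ> ?h"
    unfolding sw_conj Cons.IH by (simp add: cj_def comp_assoc)
  finally show ?case by (simp only: list.map prodE.simps comp_assoc)
qed


lemma seg:
  assumes "\<And>x. lo < x \<Longrightarrow> x \<le> hi \<Longrightarrow> conn M x (x - 1)"
  shows "lo \<le> x \<Longrightarrow> x \<le> hi \<Longrightarrow> conn M x lo"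
proof (induction x)
  case 0
  then show ?case by (simp add: conn_refl)
next
  case (Suc k)
  show ?case
  proof (cases "Suc k = lo")
    case True
    then show ?thesis by (simp add: conn_refl)
  next
    case False
    then have "lo \<le> k" using Suc.prems by simp
    then have "conn M k lo" using Suc by simp
    moreover have "conn M (Suc k) k" using assms[of "Suc k"] Suc.prems False by simp
    ultimately show ?thesis using conn_trans by blast
  qed
qed

lemma W1:
  assumes o: "1 \<le> q" "q < r" "r < s" "s < t" "t \<le> n"
    and hW: "\<And>x. conn M x (cyc n (sw q s (sw r t x)))"
    and x: "x \<in> {1..n}"
  shows "conn M x q"
proof -
  have step: "conn M x (x - 1)" if "2 \<le> x" "x \<le> n" "x \<noteq> q" "x \<noteq> r" "x \<noteq> s" "x \<noteq> t" for x
    using hW[of x] that by (simp add: sw_def cyc_def)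
  have s1: "conn M x q" if "q \<le> x" "x \<le> r - 1" for x
    using seg[of q "r - 1" M x] step o that by simp
  have s2: "conn M x r" if "r \<le> x" "x \<le> s - 1" for x
    using seg[of r "s - 1" M x] step o that by simp
  have s3: "conn M x s" if "s \<le> x" "x \<le> t - 1" for x
    using seg[of s "t - 1" M x] step o that by simp
  have s4: "conn M x t" if "t \<le> x" "x \<le> n" for x
    using seg[of t n M x] step o that by simp
  have s5: "conn M x 1" if "1 \<le> x" "x \<le> q - 1" for x
    using seg[of 1 "q - 1" M x] step o that by simp
  have lq: "conn M q r"
  proof -
    have "conn M q (s - 1)" using hW[of q] o by (simp add: sw_def cyc_def)
    moreover have "conn M (s - 1) r" using s2[of "s - 1"] o by simp
    ultimately show ?thesis using conn_trans by blast
  qed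
  have lr: "conn M r s"
  proof -
    have "conn M r (t - 1)" using hW[of r] o by (simp add: sw_def cyc_def)
    moreover have "conn M (t - 1) s" using s3[of "t - 1"] o by simp
    ultimately show ?thesis using conn_trans by blast
  qed
  have lt: "conn M t q"
  proof -
    have "conn M t (r - 1)" using hW[of t] o by (simp add: sw_def cyc_def)
    moreover have "conn M (r - 1) q" using s1[of "r - 1"] o by simp
    ultimately show ?thesis using conn_trans by blast
  qed
  have rq: "conn M r q" using lq conn_sym by blast
  have sq: "conn M s q" using lr rq conn_sym conn_trans by blast
  show ?thesis
  proof (cases "q = 1")
    case True
    have "conn M s n" using hW[of s] o True by (simp add: sw_def cyc_def)
    then have "conn M s t" using s4[of n] o conn_trans by blast
    consider "x \<le> r - 1" | "r \<le> x \<and> x \<le> s - 1" | "s \<le> x \<and> x \<le> t - 1" | "t \<le> x" using x by linarith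
    then show ?thesis
    proof cases
      case 1
      then show ?thesis using s1 True x by simp
    next
      case 2
      then have "conn M x r" using s2 x by simp
      then show ?thesis using rq conn_trans by blast
    next
      case 3
      then have "conn M x s" using s3 x by simp
      then show ?thesis using sq conn_trans by blast
    next
      case 4
      then have "conn M x t" using s4 x by simp
      then show ?thesis using lt conn_trans by blast
    qed
  next
    case False
    have "conn M s (q - 1)" using hW[of s] o False by (simp add: sw_def cyc_def)
    then have s1': "conn M s 1" using s5[of "q - 1"] o False conn_trans by auto
    have "conn M 1 n" using hW[of 1] o False by (simp add: sw_def cyc_def)
    then have "conn M 1 t" using s4[of n] o conn_trans by blast
    then have oq: "conn M 1 q" using lt conn_trans by blast
    consider "x \<le> q - 1" | "q \<le> x \<and> x \<le> r - 1" | "r \<le> x \<and> x \<le> s - 1" | "s \<le> x \<and> x \<le> t - 1" | "t \<le> x" using x by linarith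
    then show ?thesis
    proof cases
      case 1
      then have "conn M x 1" using s5 x by simp
      then show ?thesis using oq conn_trans by blast
    next
      case 2
      then show ?thesis using s1 x by simp
    next
      case 3
      then have "conn M x r" using s2 x by simp
      then show ?thesis using rq conn_trans by blast
    next
      case 4
      then have "conn M x s" using s3 x by simp
      then show ?thesis using sq conn_trans by blast
    next
      case 5
      then have "conn M x t" using s4 x by simp
      then show ?thesis using lt conn_trans by blast
    qed
  qed
qed

lemma W2:
  assumes o: "1 \<le> r" "r < s" "s < t" "t \<le> n"
    and hW: "\<And>x. conn M x (cyc n (sw s t (sw r s x)))"
    and x: "x \<in> {1..n}"
  shows "conn M x r"
proof -
  have step: "conn M x (x - 1)" if "2 \<le> x" "x \<le> n" "x \<noteq> r" "x \<noteq> s" "x \<noteq> t" for x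
    using hW[of x] that by (simp add: sw_def cyc_def)
  have s2: "conn M x r" if "r \<le> x" "x \<le> s - 1" for x
    using seg[of r "s - 1" M x] step o that by simp
  have s3: "conn M x s" if "s \<le> x" "x \<le> t - 1" for x
    using seg[of s "t - 1" M x] step o that by simp
  have s4: "conn M x t" if "t \<le> x" "x \<le> n" for x
    using seg[of t n M x] step o that by simp
  have s5: "conn M x 1" if "1 \<le> x" "x \<le> r - 1" for x
    using seg[of 1 "r - 1" M x] step o that by simp
  have lr: "conn M r s"
  proof -
    have "conn M r (t - 1)" using hW[of r] o by (simp add: sw_def cyc_def)
    moreover have "conn M (t - 1) s" using s3[of "t - 1"] o by simp
    ultimately show ?thesis using conn_trans by blast
  qed
  have lt: "conn M t r"
  proof -
    have "conn M t (s - 1)" using hW[of t] o by (simp add: sw_def cyc_def)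
    moreover have "conn M (s - 1) r" using s2[of "s - 1"] o by simp
    ultimately show ?thesis using conn_trans by blast
  qed
  have sr: "conn M s r" using lr conn_sym by blast
  show ?thesis
  proof (cases "r = 1")
    case True
    consider "x \<le> s - 1" | "s \<le> x \<and> x \<le> t - 1" | "t \<le> x" using x by linarith
    then show ?thesis
    proof cases
      case 1
      then show ?thesis using s2 True x by simp
    next
      case 2
      then have "conn M x s" using s3 x by simp
      then show ?thesis using sr conn_trans by blast
    next
      case 3
      then have "conn M x t" using s4 x by simp
      then show ?thesis using lt conn_trans by blast
    qed
  next
    case False
    have "conn M 1 n" using hW[of 1] o False by (simp add: sw_def cyc_def)
    then have "conn M 1 t" using s4[of n] o conn_trans by blast
    then have oq: "conn M 1 r" using lt conn_trans by blast
    consider "x \<le> r - 1" | "r \<le> x \<and> x \<le> s - 1" | "s \<le> x \<and> x \<le> t - 1" | "t \<le> x" using x by linarith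
    then show ?thesis
    proof cases
      case 1
      then have "conn M x 1" using s5 x by simp
      then show ?thesis using oq conn_trans by blast
    next
      case 2
      then show ?thesis using s2 x by simp
    next
      case 3
      then have "conn M x s" using s3 x by simp
      then show ?thesis using sr conn_trans by blast
    next
      case 4
      then have "conn M x t" using s4 x by simp
      then show ?thesis using lt conn_trans by blast
    qed
  qed
qed

lemma W0:
  assumes hW: "\<And>x. conn M x (cyc n x)" and x: "x \<in> {1..n}"
  shows "conn M x 1"
proof -
  have step: "conn M x (x - 1)" if "1 < x" "x \<le> n" for x
    using hW[of x] that by (simp add: cyc_def)
  show ?thesis using seg[of 1 n M x] step x by auto
qed


lemma sw_inv[simp]: "sw i j (sw i j x) = x"
  by (simp add: sw_def)

lemma key:
  assumes hW: "\<And>x. conn M x (cyc n (sw (snd b) (fst b) (sw (snd a) (fst a) x)))"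
    and ob: "obstructing n a b"
  shows "\<exists>q0. \<forall>x\<in>{1..n}. conn M x q0"
  using ob unfolding obstructing_def
proof (elim disjE exE conjE)
  fix t s r q
  assume o: "t \<le> n" "s < t" "r < s" "q < r" "1 \<le> q" and ab: "a = (t, r)" "b = (s, q)"
  have "\<And>x. conn M x (cyc n (sw q s (sw r t x)))" using hW ab by simp
  then have "\<forall>x\<in>{1..n}. conn M x q" using W1[of q r s t n M] o by auto
  then show ?thesis by blast
next
  fix t s r q
  assume o: "t \<le> n" "s < t" "r < s" "q < r" "1 \<le> q" and ab: "a = (s, q)" "b = (t, r)"
  have eqf: "sw r t (sw q s x) = sw q s (sw r t x)" for x using o by (simp add: sw_def)
  have "conn M x (cyc n (sw q s (sw r t x)))" for x using hW[of x] ab eqf[of x] by simp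
  then have "\<forall>x\<in>{1..n}. conn M x q" using W1[of q r s t n M] o by auto
  then show ?thesis by blast
next
  fix t s r
  assume o: "t \<le> n" "s < t" "r < s" "1 \<le> r" and ab: "a = (s, r)" "b = (t, s)"
  have "\<And>x. conn M x (cyc n (sw s t (sw r s x)))" using hW ab by simp
  then have "\<forall>x\<in>{1..n}. conn M x r" using W2[of r s t n M] o by auto
  then show ?thesis by blast
next
  fix t s r
  assume o: "t \<le> n" "s < t" "r < s" "1 \<le> r" and ab: "a = (t, s)" "b = (t, r)"
  have eqf: "sw r t (sw s t x) = sw s t (sw r s x)" for x using o by (simp add: sw_def)
  have "conn M x (cyc n (sw s t (sw r s x)))" for x using hW[of x] ab eqf[of x] by simp
  then have "\<forall>x\<in>{1..n}. conn M x r" using W2[of r s t n M] o by auto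
  then show ?thesis by blast
next
  fix t s r
  assume o: "t \<le> n" "s < t" "r < s" "1 \<le> r" and ab: "a = (t, r)" "b = (s, r)"
  have eqf: "sw r s (sw r t x) = sw s t (sw r s x)" for x using o by (simp add: sw_def)
  have "conn M x (cyc n (sw s t (sw r s x)))" for x using hW[of x] ab eqf[of x] by simp
  then have "\<forall>x\<in>{1..n}. conn M x r" using W2[of r s t n M] o by auto
  then show ?thesis by blast
next
  fix t s
  assume ab: "a = (t, s)" "b = (t, s)"
  have "\<And>x. conn M x (cyc n x)" using hW ab by simp
  then have "\<forall>x\<in>{1..n}. conn M x 1" using W0[of M n] by auto
  then show ?thesis by blast
qed

lemma main_perm:
  assumes c: "cyc n = prodE (X @ [a] @ Y @ [b] @ Z)"
    and len: "length (X @ [a] @ Y @ [b] @ Z) + 1 = n"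
    and ob: "obstructing n a b"
  shows False
proof -
  define sa where "sa = sw (snd a) (fst a)"
  define sb where "sb = sw (snd b) (fst b)"
  define Z1 where "Z1 = map (cj b) Z"
  define M where "M = X @ map (cj a) (Y @ Z1)"
  have e1: "sb \<circ> prodE Z = prodE Z1 \<circ> sb" unfolding sb_def Z1_def by (rule hurwitz)
  have e2: "sa \<circ> prodE (Y @ Z1) = prodE (map (cj a) (Y @ Z1)) \<circ> sa"
    unfolding sa_def by (rule hurwitz)
  have "prodE (X @ [a] @ Y @ [b] @ Z) = prodE X \<circ> (sa \<circ> (prodE Y \<circ> (sb \<circ> prodE Z)))"
    by (simp add: prodE_append sa_def sb_def comp_assoc)
  also have "\<dots> = prodE X \<circ> (sa \<circ> (prodE Y \<circ> (prodE Z1 \<circ> sb)))" by (simp only: e1)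
  also have "\<dots> = prodE X \<circ> ((sa \<circ> prodE (Y @ Z1)) \<circ> sb)" by (simp only: prodE_append comp_assoc)
  also have "\<dots> = prodE X \<circ> ((prodE (map (cj a) (Y @ Z1)) \<circ> sa) \<circ> sb)" by (simp only: e2)
  finally have eq: "prodE (X @ [a] @ Y @ [b] @ Z) = prodE X \<circ> ((prodE (map (cj a) (Y @ Z1)) \<circ> sa) \<circ> sb)" .
  have "cyc n = prodE X \<circ> ((prodE (map (cj a) (Y @ Z1)) \<circ> sa) \<circ> sb)"
    by (rule HOL.trans[OF c eq])
  also have "\<dots> = prodE M \<circ> sa \<circ> sb" by (simp add: M_def prodE_append comp_assoc)
  finally have "cyc n = prodE M \<circ> sa \<circ> sb" .
  then have W: "prodE M x = cyc n (sb (sa x))" for x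
    by (simp add: fun_eq_iff sa_def sb_def)
  have hW: "\<And>x. conn M x (cyc n (sw (snd b) (fst b) (sw (snd a) (fst a) x)))"
    using conn_prodE[of M] W unfolding sa_def sb_def by metis
  obtain q0 where q0: "\<forall>x\<in>{1..n}. conn M x q0" using key[OF hW ob] by blast
  have "card {1..n} \<le> length M + card {q0}"
    by (rule count_conn) (use q0 in auto)
  moreover have "length M + 3 = n" using len by (simp add: M_def Z1_def)
  ultimately show False by simp
qed

theorem lemma3p3:
  fixes n :: nat and A :: "(nat \<times> nat) list"
  assumes "positive_word n A"
    and "braid_le n [] (expand A)"
    and "braid_le n (expand A) (expand (delta n))"
  shows "\<not> (\<exists>B a C b D. positive_word n B \<and> positive_word n C \<and> positive_word n D \<and>
            valid_band n a \<and> valid_band n b \<and> obstructing n a b \<and>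
            braid_eq n (expand A) (expand (B @ [a] @ C @ [b] @ D)))"
proof
  assume "\<exists>B a C b D. positive_word n B \<and> positive_word n C \<and> positive_word n D \<and>
            valid_band n a \<and> valid_band n b \<and> obstructing n a b \<and>
            braid_eq n (expand A) (expand (B @ [a] @ C @ [b] @ D))"
  then obtain B a C b D where pB: "positive_word n B" and pC: "positive_word n C"
    and pD: "positive_word n D" and va: "valid_band n a" and vb: "valid_band n b"
    and ob: "obstructing n a b" and eqA: "braid_eq n (expand A) (expand (B @ [a] @ C @ [b] @ D))"
    by blast
  obtain P1 P2 where p1: "positive_word n P1" and p2: "positive_word n P2"
    and eqd: "braid_eq n (expand (delta n)) (expand P1 @ expand A @ expand P2)"
    using assms(3) unfolding braid_le_def by blast
  let ?L = "(P1 @ B) @ [a] @ C @ [b] @ (D @ P2)"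
  have "braid_eq n (expand P1 @ expand A @ expand P2)
          (expand P1 @ expand (B @ [a] @ C @ [b] @ D) @ expand P2)"
    using eqA by (rule braid_eq.ctxt)
  moreover have "expand ?L = expand P1 @ expand (B @ [a] @ C @ [b] @ D) @ expand P2"
    by (simp add: expand_def)
  ultimately have "braid_eq n (expand (delta n)) (expand ?L)"
    using eqd braid_eq.trans by metis
  then have inv: "perm_of (expand (delta n)) = perm_of (expand ?L)"
    "esum (expand (delta n)) = esum (expand ?L)"
    using braid_eq_inv by blast+
  have n2: "2 \<le> n" using va by (auto simp: valid_band_def)
  have allv: "\<forall>p\<in>set ?L. snd p < fst p"
    using pB pC pD p1 p2 va vb by (auto simp: positive_word_def valid_band_def)
  have c: "cyc n = prodE ?L"
    using inv(1) perm_delta[of n] perm_expand[OF allv] n2 by simp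
  have "int (length (delta n)) = int (length ?L)"
    using inv(2) by (simp add: esum_expand)
  then have len: "length ?L + 1 = n" using n2 by (simp add: length_delta)
  show False using main_perm[OF c len ob] .
qed

end
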